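(* If $P$ is a rooted star poset with $n$ elements, then the degree of noninvertibility of promotion $\partial:\Lambda(P)\to\Lambda(P)$ equals $n$.
   Context: $\Lambda(P)$ is the set of labelings (bijections $P\to[n]$) of $P$. Promotion $\partial$: for non-maximal $x$, the $L$-successor of $x$ is the element greater than $x$ with minimal label; the promotion chain is $v_1=L^{-1}(1)$, $v_{i+1}$ the $L$-successor of $v_i$, ending at the first maximal $v_m$; $\partial(L)(x)=L(x)-1$ off the chain, $\partial(L)(v_i)=L(v_{i+1})-1$ for $i<m$, $\partial(L)(v_m)=n$. A rooted star poset is a poset with a unique maximal element (the root) that covers every other element, and no other relations. The degree of noninvertibility of $f:X\to X$ ($X$ finite) is $\deg(f)=\frac{1}{|X|}\sum_{x\in X}|f^{-1}(x)|^2$. *)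

theory Defs
  imports Complex_Main
begin

text \<open>A finite poset is given by a finite carrier set P and a strict order relation lt
  (only its restriction to P matters). Labelings are bijections P -> {1..n} (n = card P),
  taken to be 0 outside P so that they are canonical representatives.\<close>

definition labelings :: "'a set \<Rightarrow> ('a \<Rightarrow> nat) set" where
  "labelings P = {L. bij_betw L P {1..card P} \<and> (\<forall>x. x \<notin> P \<longrightarrow> L x = 0)}"

definition is_maximal :: "'a set \<Rightarrow> ('a \<Rightarrow> 'a \<Rightarrow> bool) \<Rightarrow> 'a \<Rightarrow> bool" where
  "is_maximal P lt x \<longleftrightarrow> x \<in> P \<and> \<not> (\<exists>y\<in>P. lt x y)"

definition L_succ :: "'a set \<Rightarrow> ('a \<Rightarrow> 'a \<Rightarrow> bool) \<Rightarrow> ('a \<Rightarrow> nat) \<Rightarrow> 'a \<Rightarrow> 'a" where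
  "L_succ P lt L x = (ARG_MIN L y. y \<in> P \<and> lt x y)"

definition chain_start :: "'a set \<Rightarrow> ('a \<Rightarrow> nat) \<Rightarrow> 'a" where
  "chain_start P L = (THE x. x \<in> P \<and> L x = 1)"

definition chain_elt :: "'a set \<Rightarrow> ('a \<Rightarrow> 'a \<Rightarrow> bool) \<Rightarrow> ('a \<Rightarrow> nat) \<Rightarrow> nat \<Rightarrow> 'a" where
  "chain_elt P lt L i = (L_succ P lt L ^^ i) (chain_start P L)"

definition in_chain :: "'a set \<Rightarrow> ('a \<Rightarrow> 'a \<Rightarrow> bool) \<Rightarrow> ('a \<Rightarrow> nat) \<Rightarrow> 'a \<Rightarrow> bool" where
  "in_chain P lt L x \<longleftrightarrow>
     (\<exists>i. chain_elt P lt L i = x \<and> (\<forall>j<i. \<not> is_maximal P lt (chain_elt P lt L j)))"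

definition promotion :: "'a set \<Rightarrow> ('a \<Rightarrow> 'a \<Rightarrow> bool) \<Rightarrow> ('a \<Rightarrow> nat) \<Rightarrow> ('a \<Rightarrow> nat)" where
  "promotion P lt L = (\<lambda>x.
     if x \<notin> P then 0
     else if in_chain P lt L x then
       (if is_maximal P lt x then card P else L (L_succ P lt L x) - 1)
     else L x - 1)"

definition rooted_star :: "'a set \<Rightarrow> ('a \<Rightarrow> 'a \<Rightarrow> bool) \<Rightarrow> 'a \<Rightarrow> bool" where
  "rooted_star P lt r \<longleftrightarrow> finite P \<and> r \<in> P \<and>
     (\<forall>x\<in>P. \<forall>y\<in>P. lt x y \<longleftrightarrow> (y = r \<and> x \<noteq> r))"

definition deg_noninv :: "('b \<Rightarrow> 'b) \<Rightarrow> 'b set \<Rightarrow> real" where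
  "deg_noninv f X = (1 / real (card X)) * (\<Sum>x\<in>X. real (card {y\<in>X. f y = x}) ^ 2)"

end

theory Submission
  imports Defs
begin

lemma max_iff:
  assumes "rooted_star P lt r"
  shows "is_maximal P lt x \<longleftrightarrow> x = r"
  using assms unfolding is_maximal_def rooted_star_def by auto

lemma lab_inj: "L \<in> labelings P \<Longrightarrow> inj_on L P"
  unfolding labelings_def bij_betw_def by auto

lemma lab_range: "L \<in> labelings P \<Longrightarrow> x \<in> P \<Longrightarrow> L x \<in> {1..card P}"
  unfolding labelings_def bij_betw_def by auto

lemma lab_out: "L \<in> labelings P \<Longrightarrow> x \<notin> P \<Longrightarrow> L x = 0"
  unfolding labelings_def by auto

lemma start:
  assumes "rooted_star P lt r" "L \<in> labelings P"
  shows "chain_start P L \<in> P \<and> L (chain_start P L) = 1"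
proof -
  have fin: "finite P" "r \<in> P" using assms(1) unfolding rooted_star_def by auto
  then have "card P \<ge> 1" by (metis One_nat_def Suc_leI card_gt_0_iff empty_iff)
  then have "1 \<in> L ` P" using assms(2) unfolding labelings_def bij_betw_def by auto
  then obtain x where x: "x \<in> P" "L x = 1" by auto
  have "\<exists>!x. x \<in> P \<and> L x = 1"
    using x lab_inj[OF assms(2)] by (metis inj_on_def)
  then show ?thesis unfolding chain_start_def by (rule theI')
qed

lemma succ:
  assumes "rooted_star P lt r" "x \<in> P" "x \<noteq> r"
  shows "L_succ P lt L x = r"
proof -
  have r: "r \<in> P" and rel: "\<And>x y. x\<in>P \<Longrightarrow> y\<in>P \<Longrightarrow> lt x y \<longleftrightarrow> (y = r \<and> x \<noteq> r)"
    using assms(1) unfolding rooted_star_def by auto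
  have "(\<lambda>y. y \<in> P \<and> lt x y) r" using r rel assms by auto
  then have "(\<lambda>y. y \<in> P \<and> lt x y) (ARG_MIN L y. y \<in> P \<and> lt x y)"
    by (rule arg_min_natI)
  then show ?thesis unfolding L_succ_def using rel assms by auto
qed

lemma in_chain_iff:
  assumes rs: "rooted_star P lt r" and L: "L \<in> labelings P" and x: "x \<in> P"
  shows "in_chain P lt L x \<longleftrightarrow> (x = chain_start P L \<or> x = r)"
proof -
  define v where "v = chain_start P L"
  have v: "v \<in> P" "L v = 1" using start[OF rs L] v_def by auto
  have c0: "chain_elt P lt L 0 = v" unfolding chain_elt_def v_def by simp
  have c1: "v \<noteq> r \<Longrightarrow> chain_elt P lt L 1 = r" unfolding chain_elt_def v_def[symmetric]
    using succ[OF rs v(1)] by simp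
  show ?thesis
  proof
    assume "in_chain P lt L x"
    then obtain i where i: "chain_elt P lt L i = x" "\<forall>j<i. \<not> is_maximal P lt (chain_elt P lt L j)"
      unfolding in_chain_def by blast
    show "x = chain_start P L \<or> x = r"
    proof (cases i)
      case 0 then show ?thesis using i c0 v_def by simp
    next
      case (Suc j)
      have "v \<noteq> r" using i(2)[rule_format, of 0] Suc c0 max_iff[OF rs] by auto
      then have c1': "chain_elt P lt L 1 = r" using c1 by simp
      show ?thesis
      proof (cases j)
        case 0 then show ?thesis using Suc i c1' by simp
      next
        case (Suc k)
        then have "1 < i" using \<open>i = Suc j\<close> by simp
        then show ?thesis using i(2) c1' max_iff[OF rs] by auto
      qed
    qed
  next
    assume "x = chain_start P L \<or> x = r"
    then show "in_chain P lt L x"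
    proof
      assume "x = chain_start P L"
      then show ?thesis unfolding in_chain_def using c0 v_def by (intro exI[of _ 0]) auto
    next
      assume xr: "x = r"
      show ?thesis
      proof (cases "v = r")
        case True then show ?thesis unfolding in_chain_def using c0 xr by (intro exI[of _ 0]) auto
      next
        case False then show ?thesis unfolding in_chain_def using c0 c1 xr max_iff[OF rs]
          by (intro exI[of _ 1]) auto
      qed
    qed
  qed
qed

lemma promo_formula:
  assumes rs: "rooted_star P lt r" and L: "L \<in> labelings P"
  shows "promotion P lt L x = (if x \<notin> P then 0 else if x = r then card P
            else if L x = 1 then L r - 1 else L x - 1)"
proof -
  define v where "v = chain_start P L"
  have v: "v \<in> P" "L v = 1" using start[OF rs L] v_def by auto
  have r: "r \<in> P" using rs unfolding rooted_star_def by auto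
  show ?thesis
  proof (cases "x \<in> P")
    case False then show ?thesis unfolding promotion_def by simp
  next
    case True
    note ic = in_chain_iff[OF rs L True, folded v_def]
    show ?thesis
    proof (cases "x = r")
      case True then show ?thesis using ic \<open>x \<in> P\<close> max_iff[OF rs] unfolding promotion_def by simp
    next
      case False
      have "L x = 1 \<longleftrightarrow> x = v" using v True lab_inj[OF L] by (metis inj_on_def)
      then show ?thesis using ic \<open>x \<in> P\<close> False max_iff[OF rs] succ[OF rs \<open>x\<in>P\<close> False]
        unfolding promotion_def by auto
    qed
  qed
qed



definition gl :: "'a set \<Rightarrow> 'a \<Rightarrow> ('a \<Rightarrow> nat) \<Rightarrow> nat \<Rightarrow> 'a \<Rightarrow> nat" where
  "gl P r M k x = (if x \<notin> P then 0 else if x = r then k else if M x + 1 = k then 1 else M x + 1)"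

lemma bij_from_inj:
  assumes "finite P" "inj_on f P" "f ` P \<subseteq> {1..card P}"
  shows "bij_betw f P {1..card P}"
proof -
  have "card (f ` P) = card {1..card P}" using assms(2) card_image by fastforce
  then have "f ` P = {1..card P}" using assms(3) card_subset_eq by (metis finite_atLeastAtMost)
  then show ?thesis using assms(2) unfolding bij_betw_def by simp
qed

lemma gl_lab:
  assumes rs: "rooted_star P lt r" and M: "M \<in> labelings P" and Mr: "M r = card P"
    and k: "k \<in> {1..card P}"
  shows "gl P r M k \<in> labelings P"
proof -
  have fin: "finite P" and r: "r \<in> P" using rs unfolding rooted_star_def by auto
  have injM: "inj_on M P" using lab_inj[OF M] .
  have rng: "\<And>y. y \<in> P \<Longrightarrow> y \<noteq> r \<Longrightarrow> M y \<ge> 1 \<and> M y + 1 \<le> card P"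
  proof -
    fix y assume y: "y \<in> P" "y \<noteq> r"
    have "M y \<noteq> M r" using injM y r by (metis inj_on_def)
    then show "M y \<ge> 1 \<and> M y + 1 \<le> card P" using lab_range[OF M y(1)] Mr by auto
  qed
  have gr: "gl P r M k r = k" using r unfolding gl_def by simp
  have go: "\<And>y. y \<in> P \<Longrightarrow> y \<noteq> r \<Longrightarrow> gl P r M k y = (if M y + 1 = k then 1 else M y + 1)"
    unfolding gl_def by simp
  have inj: "inj_on (gl P r M k) P"
  proof (rule inj_onI)
    fix x y assume x: "x \<in> P" and y: "y \<in> P" and e: "gl P r M k x = gl P r M k y"
    have side: "gl P r M k z \<noteq> k" if z: "z \<in> P" "z \<noteq> r" for z
    proof -
      have "M z \<ge> 1" using rng z by blast
      then show ?thesis using go[OF z] by auto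
    qed
    show "x = y"
    proof (cases "x = r")
      case True
      then have "gl P r M k y = k" using e gr by simp
      then show ?thesis using side[OF y] True by blast
    next
      case xr: False
      show ?thesis
      proof (cases "y = r")
        case True
        then have "gl P r M k x = k" using e gr by simp
        then show ?thesis using side[OF x xr] True by blast
      next
        case yr: False
        have a: "M x \<ge> 1" using rng x xr by blast
        have b: "M y \<ge> 1" using rng y yr by blast
        have "(if M x + 1 = k then 1 else M x + 1) = (if M y + 1 = k then 1 else (M y + 1::nat))"
          using e by (simp only: go[OF x xr] go[OF y yr])
        then have "M x = M y" using a b by (cases "M x + 1 = k"; cases "M y + 1 = k") simp_all
        then show ?thesis using injM x y by (metis inj_on_def)
      qed
    qed
  qed
  have "gl P r M k ` P \<subseteq> {1..card P}"
  proof
    fix z assume "z \<in> gl P r M k ` P"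
    then obtain y where y: "y \<in> P" "z = gl P r M k y" by auto
    show "z \<in> {1..card P}"
    proof (cases "y = r")
      case True then show ?thesis using y k gr by simp
    next
      case False
      have m: "M y \<ge> 1 \<and> M y + 1 \<le> card P" using rng y(1) False by blast
      have "z = (if M y + 1 = k then 1 else M y + 1)" using y(2) go[OF y(1) False] by simp
      then show ?thesis using m k by (cases "M y + 1 = k") auto
    qed
  qed
  then have B: "bij_betw (gl P r M k) P {1..card P}" by (rule bij_from_inj[OF fin inj])
  have Z: "\<forall>x. x \<notin> P \<longrightarrow> gl P r M k x = 0" unfolding gl_def by simp
  show ?thesis unfolding labelings_def using B Z by blast
qed

lemma gl_promo:
  assumes rs: "rooted_star P lt r" and M: "M \<in> labelings P" and Mr: "M r = card P"
    and k: "k \<in> {1..card P}"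
  shows "promotion P lt (gl P r M k) = M"
proof
  fix x
  have r: "r \<in> P" using rs unfolding rooted_star_def by auto
  show "promotion P lt (gl P r M k) x = M x"
    unfolding promo_formula[OF rs gl_lab[OF assms]] using lab_out[OF M] r Mr lab_range[OF M, of x]
    unfolding gl_def by auto
qed

lemma promo_gl:
  assumes rs: "rooted_star P lt r" and L: "L \<in> labelings P"
  shows "L = gl P r (promotion P lt L) (L r)"
proof
  fix x
  have r: "r \<in> P" using rs unfolding rooted_star_def by auto
  show "L x = gl P r (promotion P lt L) (L r) x"
  proof (cases "x \<in> P \<and> x \<noteq> r")
    case True
    have ne: "L x \<noteq> L r" using True r lab_inj[OF L] by (metis inj_on_def)
    have "L x \<ge> 1" "L r \<ge> 1" using lab_range[OF L] True r by auto
    then show ?thesis using ne True unfolding gl_def promo_formula[OF rs L] by auto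
  next
    case False then show ?thesis unfolding gl_def using lab_out[OF L] by auto
  qed
qed

lemma promo_lab:
  assumes rs: "rooted_star P lt r" and L: "L \<in> labelings P"
  shows "promotion P lt L \<in> labelings P \<and> promotion P lt L r = card P"
proof -
  have fin: "finite P" and r: "r \<in> P" using rs unfolding rooted_star_def by auto
  have injL: "inj_on L P" using lab_inj[OF L] .
  have rng: "\<And>y. y \<in> P \<Longrightarrow> 1 \<le> L y \<and> L y \<le> card P" using lab_range[OF L] by auto
  have ne: "\<And>y. y \<in> P \<Longrightarrow> y \<noteq> r \<Longrightarrow> L y \<noteq> L r" using injL r by (metis inj_on_def)
  define f where "f = promotion P lt L"
  have fe: "\<And>x. f x = (if x \<notin> P then 0 else if x = r then card P
            else if L x = 1 then L r - 1 else L x - 1)" unfolding f_def by (rule promo_formula[OF rs L])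
  have inj: "inj_on f P"
  proof (rule inj_onI)
    fix x y assume x: "x \<in> P" and y: "y \<in> P" and e: "f x = f y"
    show "x = y"
    proof (cases "x = r \<or> y = r")
      case True then show ?thesis using e rng[OF x] rng[OF y] rng[OF r] ne[OF x] ne[OF y] x y unfolding fe
        by (cases "x = r"; cases "y = r") (auto split: if_splits)
    next
      case False
      then have "L x = L y" using e rng[OF x] rng[OF y] rng[OF r] ne[OF x] ne[OF y] x y unfolding fe
        by (auto split: if_splits)
      then show ?thesis using injL x y by (metis inj_on_def)
    qed
  qed
  have "f ` P \<subseteq> {1..card P}"
  proof
    fix z assume "z \<in> f ` P"
    then obtain y where y: "y \<in> P" "z = f y" by auto
    show "z \<in> {1..card P}" using rng[OF y(1)] rng[OF r] ne[OF y(1)] y unfolding fe by auto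
  qed
  then have B: "bij_betw f P {1..card P}" by (rule bij_from_inj[OF fin inj])
  have Z: "\<forall>x. x \<notin> P \<longrightarrow> f x = 0" using fe by simp
  have R: "f r = card P" using fe r by simp
  show ?thesis unfolding labelings_def f_def[symmetric] using B Z R by blast
qed

lemma lab_finite:
  assumes "finite P" shows "finite (labelings P)"
proof (rule finite_subset)
  show "labelings P \<subseteq> {f. \<forall>x. (x \<in> P \<longrightarrow> f x \<in> {1..card P}) \<and> (x \<notin> P \<longrightarrow> f x = 0)}"
  proof
    fix L assume L: "L \<in> labelings P"
    show "L \<in> {f. \<forall>x. (x \<in> P \<longrightarrow> f x \<in> {1..card P}) \<and> (x \<notin> P \<longrightarrow> f x = 0)}"
      using lab_range[OF L] lab_out[OF L] by simp
  qed
  show "finite {f. \<forall>x. (x \<in> P \<longrightarrow> f x \<in> {1..card P}) \<and> (x \<notin> P \<longrightarrow> f x = (0::nat))}"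
    by (rule finite_set_of_finite_funs[OF assms]) simp
qed

lemma lab_nonempty:
  assumes "finite P" shows "labelings P \<noteq> {}"
proof -
  obtain h where h: "bij_betw h P {1..card P}"
    using finite_same_card_bij[OF assms, of "{1..card P}"] by auto
  define L where "L x = (if x \<in> P then h x else 0)" for x
  have "bij_betw L P {1..card P}" using h by (rule bij_betw_cong[THEN iffD1, rotated]) (simp add: L_def)
  then have "L \<in> labelings P" unfolding labelings_def L_def by simp
  then show ?thesis by auto
qed

theorem mainTheorem4:
  fixes P :: "'a set" and lt :: "'a \<Rightarrow> 'a \<Rightarrow> bool" and r :: 'a and n :: nat
  assumes "rooted_star P lt r"
    and "card P = n"
  shows "deg_noninv (promotion P lt) (labelings P) = real n"
proof -
  note rs = assms(1)
  have fin: "finite P" and r: "r \<in> P" using rs unfolding rooted_star_def by auto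
  have n1: "n \<ge> 1" using fin r assms(2) by (metis One_nat_def Suc_leI card_gt_0_iff empty_iff)
  define La where "La = labelings P"
  define T where "T = {M \<in> La. M r = n}"
  define f where "f = promotion P lt"
  have finL: "finite La" unfolding La_def using lab_finite[OF fin] .
  have finT: "finite T" unfolding T_def using finL by simp
  have fib: "M \<in> T \<Longrightarrow> {y\<in>La. f y = M} = gl P r M ` {1..n}" for M
  proof
    assume M: "M \<in> T"
    show "{y\<in>La. f y = M} \<subseteq> gl P r M ` {1..n}"
    proof
      fix y assume "y \<in> {y\<in>La. f y = M}"
      then have y: "y \<in> labelings P" "f y = M" unfolding La_def by auto
      have "y = gl P r M (y r)" using promo_gl[OF rs y(1)] y(2) unfolding f_def by simp
      moreover have "y r \<in> {1..n}" using lab_range[OF y(1) r] assms(2) by simp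
      ultimately show "y \<in> gl P r M ` {1..n}" by blast
    qed
    show "gl P r M ` {1..n} \<subseteq> {y\<in>La. f y = M}"
    proof
      fix z assume "z \<in> gl P r M ` {1..n}"
      then obtain k where k: "k \<in> {1..card P}" "z = gl P r M k" using assms(2) by auto
      have M': "M \<in> labelings P" "M r = card P" using M assms(2) unfolding T_def La_def by auto
      show "z \<in> {y\<in>La. f y = M}"
        using gl_lab[OF rs M' k(1)] gl_promo[OF rs M' k(1)] k(2) unfolding La_def f_def by simp
    qed
  qed
  have cfib: "M \<in> T \<Longrightarrow> card {y\<in>La. f y = M} = n" for M
  proof -
    assume M: "M \<in> T"
    have I: "inj_on (gl P r M) {1..n}"
    proof (rule inj_onI)
      fix a b assume "gl P r M a = gl P r M b"
      then have "gl P r M a r = gl P r M b r" by simp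
      then show "a = b" using r by (simp add: gl_def)
    qed
    have "card (gl P r M ` {1..n}) = n" using card_image[OF I] by simp
    then show ?thesis using fib[OF M] by simp
  qed
  have efib: "M \<notin> T \<Longrightarrow> {y\<in>La. f y = M} = {}" for M
  proof -
    assume M: "M \<notin> T"
    { fix y assume y: "y \<in> La" "f y = M"
      then have "M \<in> T" using promo_lab[OF rs, of y] assms(2) unfolding T_def La_def f_def by simp
      then have False using M by simp }
    then show ?thesis by blast
  qed
  have sumeq: "(\<Sum>M\<in>La. real (card {y\<in>La. f y = M}) ^ 2) = (\<Sum>M\<in>La. if M r = n then real n ^ 2 else 0)"
  proof (rule sum.cong)
    fix M assume M: "M \<in> La"
    show "real (card {y\<in>La. f y = M}) ^ 2 = (if M r = n then real n ^ 2 else 0)"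
    proof (cases "M r = n")
      case True then have "M \<in> T" using M unfolding T_def by simp
      then show ?thesis using cfib True by simp
    next
      case False then have "M \<notin> T" unfolding T_def by simp
      then have "{y\<in>La. f y = M} = {}" by (rule efib)
      then have "card {y\<in>La. f y = M} = 0" by (metis card.empty)
      then show ?thesis using False by simp
    qed
  qed simp
  also have "\<dots> = (\<Sum>M\<in>T. real n ^ 2)" unfolding T_def by (rule sum.inter_filter[OF finL, symmetric])
  also have "\<dots> = real (card T) * real n ^ 2" by simp
  finally have S: "(\<Sum>M\<in>La. real (card {y\<in>La. f y = M}) ^ 2) = real (card T) * real n ^ 2" .
  have bij: "bij_betw (\<lambda>L. (f L, L r)) La (T \<times> {1..n})"
  proof (rule bij_betw_imageI)
    show "inj_on (\<lambda>L. (f L, L r)) La"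
    proof (rule inj_onI)
      fix x y assume xy: "x \<in> La" "y \<in> La" "(f x, x r) = (f y, y r)"
      then have e: "f x = f y" "x r = y r" by auto
      have "x = gl P r (f x) (x r)" using promo_gl[OF rs, of x] xy unfolding La_def f_def by simp
      also have "\<dots> = gl P r (f y) (y r)" using e by simp
      also have "\<dots> = y" using promo_gl[OF rs, of y] xy unfolding La_def f_def by simp
      finally show "x = y" .
    qed
    show "(\<lambda>L. (f L, L r)) ` La = T \<times> {1..n}"
    proof
      show "(\<lambda>L. (f L, L r)) ` La \<subseteq> T \<times> {1..n}"
      proof
        fix p assume "p \<in> (\<lambda>L. (f L, L r)) ` La"
        then obtain L where L: "L \<in> labelings P" "p = (f L, L r)" unfolding La_def by auto
        have "f L \<in> T" using promo_lab[OF rs L(1)] assms(2) unfolding T_def La_def f_def by simp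
        moreover have "L r \<in> {1..n}" using lab_range[OF L(1) r] assms(2) by simp
        ultimately show "p \<in> T \<times> {1..n}" using L(2) by simp
      qed
      show "T \<times> {1..n} \<subseteq> (\<lambda>L. (f L, L r)) ` La"
      proof
        fix p assume "p \<in> T \<times> {1..n}"
        then obtain M k where p: "p = (M, k)" "M \<in> T" "k \<in> {1..n}" by auto
        have M': "M \<in> labelings P" "M r = card P" "k \<in> {1..card P}"
          using p assms(2) unfolding T_def La_def by auto
        have g: "gl P r M k \<in> La" "f (gl P r M k) = M"
          using gl_lab[OF rs M'] gl_promo[OF rs M'] unfolding La_def f_def by auto
        have "gl P r M k r = k" using r unfolding gl_def by simp
        then show "p \<in> (\<lambda>L. (f L, L r)) ` La" using g p by (intro image_eqI[where x="gl P r M k"]) auto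
      qed
    qed
  qed
  have cL: "card La = card T * n" using bij_betw_same_card[OF bij] by (simp add: card_cartesian_product)
  have "card La > 0" using finL lab_nonempty[OF fin] unfolding La_def by (simp add: card_gt_0_iff)
  then have cT: "card T > 0" using cL by simp
  have "deg_noninv f La = (1 / real (card T * n)) * (real (card T) * real n ^ 2)"
    unfolding deg_noninv_def S cL ..
  also have "\<dots> = real n" using cT n1 by (simp add: power2_eq_square)
  finally show ?thesis unfolding f_def La_def .
qed

end
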